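(* Let $d\ge 1$ be an integer and let $\mathcal{P}$ be the set of all (nonempty) integer partitions. As formal power series, $$\sum_{\lambda\in\mathcal{P}}t^{\mathrm{dif}_d(\lambda)}x^{\ell(\lambda)}y^{\lambda_1}=\frac{xy}{1-y-tx(1-y^d)-xy^d}.$$ In particular, $$\sum_{\lambda\in\mathcal{P}}t^{\mathrm{dif}_d(\lambda)}x^{\Gamma(\lambda)}=\frac{x}{1-x-tx(1-x^d)-x^{d+1}}.$$
   Context: A partition is a finite nonempty weakly decreasing sequence $\lambda=(\lambda_1,\ldots,\lambda_k)$ of positive integers; $\ell(\lambda)=k$ and $\lambda_1$ is the largest part. The perimeter is $\Gamma(\lambda)=\lambda_1+\ell(\lambda)-1$. $\mathrm{dif}_d(\lambda)=|\{i:1\le i<\ell(\lambda),\ \lambda_i-\lambda_{i+1}<d\}|$. *)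

theory Defs
  imports "HOL-Computational_Algebra.Formal_Power_Series"
begin

definition is_partition :: "nat list \<Rightarrow> bool" where
  "is_partition l \<longleftrightarrow> l \<noteq> [] \<and> sorted_wrt (\<ge>) l \<and> (\<forall>p\<in>set l. 0 < p)"

definition largest_part :: "nat list \<Rightarrow> nat" where
  "largest_part l = hd l"

definition perimeter :: "nat list \<Rightarrow> nat" where
  "perimeter l = largest_part l + length l - 1"

text \<open>dif_d: number of indices i (1 <= i < length) with lambda_i - lambda_(i+1) < d
  (0-based list indices here).\<close>
definition dif :: "nat \<Rightarrow> nat list \<Rightarrow> nat" where
  "dif d l = card {i. Suc i < length l \<and> l ! i - l ! Suc i < d}"

text \<open>Trivariate formal power series are nested: (real fps) fps fps.
  Innermost variable t, middle x, outermost y.\<close>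
definition var_y :: "real fps fps fps" where "var_y = fps_X"
definition var_x :: "real fps fps fps" where "var_x = fps_const fps_X"
definition var_t :: "real fps fps fps" where "var_t = fps_const (fps_const fps_X)"

text \<open>The formal sum over all partitions of t^dif x^length y^largest part,
  defined coefficientwise: coefficient of y^c x^b t^a counts the partitions
  with largest part c, length b and dif_d = a (a finite set).\<close>
definition gf3 :: "nat \<Rightarrow> real fps fps fps" where
  "gf3 d = Abs_fps (\<lambda>c. Abs_fps (\<lambda>b. Abs_fps (\<lambda>a.
     real (card {l. is_partition l \<and> dif d l = a \<and> length l = b \<and> largest_part l = c}))))"

text \<open>Bivariate: outer variable x, inner t; sum of t^dif x^perimeter.\<close>
definition var_x2 :: "real fps fps" where "var_x2 = fps_X"
definition var_t2 :: "real fps fps" where "var_t2 = fps_const fps_X"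

definition gf2 :: "nat \<Rightarrow> real fps fps" where
  "gf2 d = Abs_fps (\<lambda>n. Abs_fps (\<lambda>a.
     real (card {l. is_partition l \<and> dif d l = a \<and> perimeter l = n})))"

end

theory Submission imports Defs begin
unbundle fps_syntax

definition Q :: "nat \<Rightarrow> nat \<Rightarrow> nat \<Rightarrow> nat \<Rightarrow> nat list set" where
  "Q d c b a = {l. is_partition l \<and> dif d l = a \<and> length l = b \<and> largest_part l = c}"

definition g :: "nat \<Rightarrow> nat \<Rightarrow> nat \<Rightarrow> nat \<Rightarrow> real" where
  "g d c b a = real (card (Q d c b a))"

lemma part_cons:
  "is_partition (c # y # r) \<longleftrightarrow> is_partition (y # r) \<and> y \<le> c"
  unfolding is_partition_def by auto

lemma part_single: "is_partition [c] \<longleftrightarrow> 0 < c"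
  unfolding is_partition_def by auto

lemma part_le_hd: "is_partition l \<Longrightarrow> x \<in> set l \<Longrightarrow> x \<le> hd l"
  unfolding is_partition_def by (cases l) auto

lemma part_hd_pos: "is_partition l \<Longrightarrow> 0 < hd l"
  unfolding is_partition_def by (cases l) auto

lemma dif_single: "dif d [x] = 0"
  unfolding dif_def by simp

lemma dif_cons:
  "dif d (x # y # r) = (if x - y < d then 1 else 0) + dif d (y # r)"
proof -
  let ?S = "{i. Suc i < length (y # r) \<and> (y # r) ! i - (y # r) ! Suc i < d}"
  have eq: "{i. Suc i < length (x # y # r) \<and> (x # y # r) ! i - (x # y # r) ! Suc i < d}
      = (if x - y < d then {0} else {}) \<union> Suc ` ?S"
  proof (rule set_eqI)
    fix i show "i \<in> {i. Suc i < length (x # y # r) \<and> (x # y # r) ! i - (x # y # r) ! Suc i < d}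
      \<longleftrightarrow> i \<in> (if x - y < d then {0} else {}) \<union> Suc ` ?S"
      by (cases i) auto
  qed
  have fin: "finite ?S" by (rule finite_subset[of _ "{..<length (y#r)}"]) auto
  have "card ((if x - y < d then {0} else {}) \<union> Suc ` ?S)
        = card (if x - y < d then {0::nat} else {}) + card (Suc ` ?S)"
    by (rule card_Un_disjoint) (use fin in auto)
  also have "card (Suc ` ?S) = card ?S" by (simp add: card_image)
  finally show ?thesis unfolding dif_def eq by simp
qed

lemma Q_finite: "finite (Q d c b a)"
proof (rule finite_subset)
  show "Q d c b a \<subseteq> {xs. set xs \<subseteq> {..c} \<and> length xs = b}"
    unfolding Q_def largest_part_def using part_le_hd by auto
  show "finite {xs. set xs \<subseteq> {..c} \<and> length xs = b}"
    by (rule finite_lists_length_eq) simp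
qed

lemma Q_0b: "Q d 0 b a = {}"
  unfolding Q_def largest_part_def using part_hd_pos by fastforce

lemma Q_c0: "Q d c 0 a = {}"
  unfolding Q_def is_partition_def by auto

lemma Q_c1: "Q d c 1 a = (if 0 < c \<and> a = 0 then {[c]} else {})"
  unfolding Q_def largest_part_def
  by (auto simp: length_Suc_conv part_single dif_single)

lemma g_0b: "g d 0 b a = 0" by (simp add: g_def Q_0b)
lemma g_c0: "g d c 0 a = 0" by (simp add: g_def Q_c0)
lemma g_c1: "g d c 1 a = (if 0 < c \<and> a = 0 then 1 else 0)" unfolding g_def Q_c1 by simp

lemma g_rec:
  "g d c (Suc (Suc b)) a = (\<Sum>c'<Suc c. if c < c' + d then (if a = 0 then 0 else g d c' (Suc b) (a - 1))
      else g d c' (Suc b) a)"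
proof -
  define R where "R c' = {\<mu>. is_partition \<mu> \<and> length \<mu> = Suc b \<and> hd \<mu> = c' \<and>
      dif d \<mu> + (if c < c' + d then 1 else 0) = a}" for c'
  have Req: "R c' = (if c < c' + d then (if a = 0 then {} else Q d c' (Suc b) (a - 1)) else Q d c' (Suc b) a)" for c'
    unfolding R_def Q_def largest_part_def by auto
  have seteq: "Q d c (Suc (Suc b)) a = (\<Union>c'\<in>{..<Suc c}. Cons c ` R c')"
  proof (rule set_eqI)
    fix l
    show "l \<in> Q d c (Suc (Suc b)) a \<longleftrightarrow> l \<in> (\<Union>c'\<in>{..<Suc c}. Cons c ` R c')"
    proof
      assume "l \<in> Q d c (Suc (Suc b)) a"
      then obtain x y r where l: "l = x # y # r" and P: "is_partition l" "dif d l = a"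
          "length r = b" "x = c"
        unfolding Q_def largest_part_def by (auto simp: length_Suc_conv)
      have "c - y < d \<longleftrightarrow> c < y + d" using P l part_cons by auto
      then have "y # r \<in> R y" using P l part_cons dif_cons unfolding R_def by auto
      moreover have "y < Suc c" using P l part_cons by auto
      ultimately show "l \<in> (\<Union>c'\<in>{..<Suc c}. Cons c ` R c')" using l P by blast
    next
      assume "l \<in> (\<Union>c'\<in>{..<Suc c}. Cons c ` R c')"
      then obtain c' \<mu> where c': "c' < Suc c" and m: "\<mu> \<in> R c'" and l: "l = c # \<mu>" by auto
      then obtain y r where mu: "\<mu> = y # r" unfolding R_def by (cases \<mu>) auto
      have "c - y < d \<longleftrightarrow> c < y + d" using c' m mu unfolding R_def by auto
      then show "l \<in> Q d c (Suc (Suc b)) a"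
        using c' m mu l part_cons dif_cons unfolding R_def Q_def largest_part_def by auto
    qed
  qed
  have finR: "finite (R c')" for c' using Req Q_finite by simp
  have "card (Q d c (Suc (Suc b)) a) = (\<Sum>c'<Suc c. card (Cons c ` R c'))"
    unfolding seteq
    apply (rule card_UN_disjoint)
    using finR apply auto[2]
    unfolding R_def by auto
  also have "\<dots> = (\<Sum>c'<Suc c. card (R c'))" by (simp add: card_image)
  finally have "g d c (Suc (Suc b)) a = (\<Sum>c'<Suc c. real (card (R c')))" by (simp add: g_def)
  also have "\<dots> = (\<Sum>c'<Suc c. if c < c' + d then (if a = 0 then 0 else g d c' (Suc b) (a - 1))
      else g d c' (Suc b) a)"
    by (rule sum.cong) (auto simp: Req g_def)
  finally show ?thesis .
qed

lemma sum_step: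
  fixes A B :: "nat \<Rightarrow> real"
  assumes d: "1 \<le> d"
  shows "(\<Sum>c'<Suc (Suc k). if Suc k < c' + d then A c' else B c')
       = (\<Sum>c'<Suc k. if k < c' + d then A c' else B c') + A (Suc k)
         + (if d \<le> Suc k then B (Suc k - d) - A (Suc k - d) else 0)"
proof -
  have "(\<Sum>c'<Suc (Suc k). if Suc k < c' + d then A c' else B c')
      = (\<Sum>c'<Suc k. if Suc k < c' + d then A c' else B c') + A (Suc k)"
    using d by simp
  moreover have "(\<Sum>c'<Suc k. if Suc k < c' + d then A c' else B c')
      = (\<Sum>c'<Suc k. if k < c' + d then A c' else B c')
        + (\<Sum>c'<Suc k. if c' = Suc k - d \<and> d \<le> Suc k then B c' - A c' else 0)"
    unfolding sum.distrib[symmetric] by (rule sum.cong) auto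
  moreover have "(\<Sum>c'<Suc k. if c' = Suc k - d \<and> d \<le> Suc k then B c' - A c' else 0)
      = (if d \<le> Suc k then B (Suc k - d) - A (Suc k - d) else 0)"
  proof (cases "d \<le> Suc k")
    case True
    then have "(\<Sum>c'<Suc k. if c' = Suc k - d \<and> d \<le> Suc k then B c' - A c' else 0)
        = (\<Sum>c'<Suc k. if c' = Suc k - d then B c' - A c' else 0)" by simp
    also have "\<dots> = B (Suc k - d) - A (Suc k - d)"
      using d by (simp add: sum.delta; linarith)
    finally show ?thesis using True by simp
  qed simp
  ultimately show ?thesis by simp
qed

lemma g_E:
  assumes d: "1 \<le> d"
  shows "g d c b a - (if c = 0 then 0 else g d (c - 1) b a)
     - (if b = 0 \<or> a = 0 then 0 else g d c (b - 1) (a - 1))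
     + (if c < d \<or> b = 0 \<or> a = 0 then 0 else g d (c - d) (b - 1) (a - 1))
     - (if c < d \<or> b = 0 then 0 else g d (c - d) (b - 1) a)
     = (if c = 1 \<and> b = 1 \<and> a = 0 then 1 else 0)"
proof (cases c)
  case 0 then show ?thesis using d by (simp add: g_0b)
next
  case (Suc k)
  show ?thesis
  proof (cases b)
    case 0 then show ?thesis by (simp add: g_c0)
  next
    case (Suc b1)
    show ?thesis
    proof (cases b1)
      case 0 then show ?thesis using \<open>b = Suc b1\<close> \<open>c = Suc k\<close> d
        by (simp add: g_c0 g_c1[simplified])
    next
      case (Suc b2)
      define A where "A c' = (if a = 0 then 0 else g d c' (Suc b2) (a - 1))" for c'
      define B where "B c' = g d c' (Suc b2) a" for c'
      have "g d (Suc k) (Suc (Suc b2)) a = g d k (Suc (Suc b2)) a + A (Suc k)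
         + (if d \<le> Suc k then B (Suc k - d) - A (Suc k - d) else 0)"
        unfolding g_rec A_def[symmetric] B_def[symmetric] by (rule sum_step[OF d])
      then show ?thesis using \<open>b = Suc b1\<close> \<open>c = Suc k\<close> \<open>b1 = Suc b2\<close> d
        by (auto simp: A_def B_def)
    qed
  qed
qed

lemma gf3_nth: "gf3 d $ c $ b $ a = g d c b a"
  by (simp add: gf3_def g_def Q_def)

lemma gf3_mult:
  assumes d: "1 \<le> d"
  shows "gf3 d * (1 - var_y - var_t * var_x * (1 - var_y ^ d) - var_x * var_y ^ d) = var_x * var_y"
proof -
  let ?G = "gf3 d"
  have expand: "?G * (1 - var_y - var_t * var_x * (1 - var_y ^ d) - var_x * var_y ^ d)
     = ?G - var_y * ?G - var_t * (var_x * ?G) + var_t * (var_x * (var_y ^ d * ?G))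
       - var_x * (var_y ^ d * ?G)"
    by (simp add: algebra_simps)
  show ?thesis unfolding expand
  proof (intro fps_ext)
    fix c b a
    show "(?G - var_y * ?G - var_t * (var_x * ?G) + var_t * (var_x * (var_y ^ d * ?G))
       - var_x * (var_y ^ d * ?G)) $ c $ b $ a = (var_x * var_y) $ c $ b $ a"
      using g_E[OF d, of c b a]
      by (auto simp: var_x_def var_y_def var_t_def fps_X_power_mult_nth gf3_nth)
  qed
qed

lemma fps_inv_right:
  fixes f :: "'a::{comm_ring_1,inverse} fps"
  assumes "f $ 0 * inverse (f $ 0) = 1"
  shows "f * inverse f = 1"
  unfolding fps_inverse_def by (rule fps_right_inverse[OF assms])

lemma inv_one_fps: "inverse (1 :: real fps) = 1"
  using fps_const_inverse[of "1::real"] by simp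

lemma part1:
  assumes d: "1 \<le> d"
  shows "gf3 d = var_x * var_y *
           inverse (1 - var_y - var_t * var_x * (1 - var_y ^ d) - var_x * var_y ^ d)"
proof -
  let ?D = "1 - var_y - var_t * var_x * (1 - var_y ^ d) - var_x * var_y ^ d"
  have D00: "?D $ 0 $ 0 = 1" using d by (simp add: var_x_def var_y_def var_t_def)
  have "?D $ 0 * inverse (?D $ 0) = 1"
    by (rule fps_inv_right) (unfold D00, simp add: inv_one_fps)
  then have inv: "?D * inverse ?D = 1" by (rule fps_inv_right)
  have "gf3 d = gf3 d * (?D * inverse ?D)" by (simp add: inv)
  also have "\<dots> = (gf3 d * ?D) * inverse ?D" by (simp add: mult.assoc)
  also have "\<dots> = var_x * var_y * inverse ?D" by (simp add: gf3_mult[OF d])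
  finally show ?thesis .
qed

definition H :: "nat \<Rightarrow> nat \<Rightarrow> nat \<Rightarrow> real" where
  "H d m a = (\<Sum>b\<le>m. g d (m - b) b a)"

lemma H_0: "H d 0 a = 0" by (simp add: H_def g_0b)

lemma shiftd:
  fixes F :: "nat \<Rightarrow> nat \<Rightarrow> real"
  shows "(\<Sum>b\<le>m. if m - b < d then 0 else F (m - b - d) b)
     = (if m < d then 0 else \<Sum>b\<le>m - d. F (m - d - b) b)"
proof (cases "m < d")
  case True
  have "(\<Sum>b\<le>m. if m - b < d then 0 else F (m - b - d) b) = (\<Sum>b\<le>m. (0::real))"
    by (rule sum.cong) (use True in auto)
  then show ?thesis using True by simp
next
  case False
  have "(\<Sum>b\<le>m. if m - b < d then 0 else F (m - b - d) b) = (\<Sum>b\<le>m - d. F (m - d - b) b)"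
    by (rule sum.mono_neutral_cong_right) (use False in \<open>auto simp: add.commute\<close>)
  then show ?thesis using False by simp
qed

lemma H_E:
  assumes d: "1 \<le> d"
  shows "H d (Suc m) a - H d m a - (if a = 0 then 0 else H d m (a - 1))
     + (if m < d \<or> a = 0 then 0 else H d (m - d) (a - 1))
     - (if m < d then 0 else H d (m - d) a) = (if m = 1 \<and> a = 0 then 1 else 0)"
proof -
  define L1 where "L1 b = g d (Suc m - b) b a" for b
  define L2 where "L2 b = (if Suc m - b = 0 then 0 else g d (Suc m - b - 1) b a)" for b
  define L3 where "L3 b = (if b = 0 \<or> a = 0 then 0 else g d (Suc m - b) (b - 1) (a - 1))" for b
  define L4 where "L4 b = (if Suc m - b < d \<or> b = 0 \<or> a = 0 then 0
      else g d (Suc m - b - d) (b - 1) (a - 1))" for b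
  define L5 where "L5 b = (if Suc m - b < d \<or> b = 0 then 0 else g d (Suc m - b - d) (b - 1) a)" for b
  define R where "R b = (if Suc m - b = 1 \<and> b = 1 \<and> a = 0 then 1 else (0::real))" for b
  have pt: "L1 b - L2 b - L3 b + L4 b - L5 b = R b" for b
    unfolding L1_def L2_def L3_def L4_def L5_def R_def by (rule g_E[OF d])
  have "(\<Sum>b\<le>Suc m. L1 b - L2 b - L3 b + L4 b - L5 b) = (\<Sum>b\<le>Suc m. R b)"
    by (simp add: pt)
  then have S: "sum L1 {..Suc m} - sum L2 {..Suc m} - sum L3 {..Suc m} + sum L4 {..Suc m}
      - sum L5 {..Suc m} = sum R {..Suc m}"
    by (simp add: sum.distrib sum_subtractf)
  have s1: "sum L1 {..Suc m} = H d (Suc m) a" by (simp add: L1_def H_def)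
  have s2: "sum L2 {..Suc m} = H d m a"
    unfolding sum.atMost_Suc H_def by (auto simp: L2_def intro!: sum.cong)
  have s3: "sum L3 {..Suc m} = (if a = 0 then 0 else H d m (a - 1))"
    unfolding sum.atMost_Suc_shift H_def by (auto simp: L3_def intro!: sum.cong)
  have s4: "sum L4 {..Suc m} = (if m < d \<or> a = 0 then 0 else H d (m - d) (a - 1))"
  proof -
    have "sum L4 {..Suc m} = (\<Sum>b\<le>m. if m - b < d then 0 else
         (if a = 0 then 0 else g d (m - b - d) b (a - 1)))"
      unfolding sum.atMost_Suc_shift by (auto simp: L4_def intro!: sum.cong)
    also have "\<dots> = (if m < d then 0 else \<Sum>b\<le>m - d. (if a = 0 then 0 else g d (m - d - b) b (a - 1)))"
      by (rule shiftd[where F = "\<lambda>c b. if a = 0 then 0 else g d c b (a - 1)"])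
    finally show ?thesis by (simp add: H_def)
  qed
  have s5: "sum L5 {..Suc m} = (if m < d then 0 else H d (m - d) a)"
  proof -
    have "sum L5 {..Suc m} = (\<Sum>b\<le>m. if m - b < d then 0 else g d (m - b - d) b a)"
      unfolding sum.atMost_Suc_shift by (auto simp: L5_def intro!: sum.cong)
    also have "\<dots> = (if m < d then 0 else \<Sum>b\<le>m - d. g d (m - d - b) b a)"
      by (rule shiftd[where F = "\<lambda>c b. g d c b a"])
    finally show ?thesis by (simp add: H_def)
  qed
  have sR: "sum R {..Suc m} = (if m = 1 \<and> a = 0 then 1 else 0)"
  proof -
    have "sum R {..Suc m} = (\<Sum>b\<le>Suc m. if b = 1 then (if m = 1 \<and> a = 0 then 1 else 0) else 0)"
      by (rule sum.cong) (auto simp: R_def)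
    also have "\<dots> = (if m = 1 \<and> a = 0 then 1 else 0)" by (simp add: sum.delta)
    finally show ?thesis .
  qed
  show ?thesis using S s1 s2 s3 s4 s5 sR by simp
qed

lemma gf2_nth: "gf2 d $ n $ a = H d (Suc n) a"
proof -
  have seteq: "{l. is_partition l \<and> dif d l = a \<and> perimeter l = n}
      = (\<Union>b\<in>{..Suc n}. Q d (Suc n - b) b a)"
  proof (rule set_eqI)
    fix l
    show "l \<in> {l. is_partition l \<and> dif d l = a \<and> perimeter l = n}
      \<longleftrightarrow> l \<in> (\<Union>b\<in>{..Suc n}. Q d (Suc n - b) b a)"
    proof
      assume "l \<in> {l. is_partition l \<and> dif d l = a \<and> perimeter l = n}"
      then have P: "is_partition l" "dif d l = a" "hd l + length l - 1 = n"
        by (auto simp: perimeter_def largest_part_def)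
      have "l \<noteq> []" using P(1) by (simp add: is_partition_def)
      then have "length l \<ge> 1" by (cases l) auto
      then have "length l \<in> {..Suc n}" "hd l = Suc n - length l" using P(3) by auto
      then show "l \<in> (\<Union>b\<in>{..Suc n}. Q d (Suc n - b) b a)"
        using P by (auto simp: Q_def largest_part_def)
    next
      assume "l \<in> (\<Union>b\<in>{..Suc n}. Q d (Suc n - b) b a)"
      then obtain b where b: "b \<le> Suc n" "l \<in> Q d (Suc n - b) b a" by auto
      then have P: "is_partition l" "dif d l = a" "length l = b" "hd l = Suc n - b"
        by (auto simp: Q_def largest_part_def)
      have "l \<noteq> []" using P(1) by (simp add: is_partition_def)
      then have "b \<ge> 1" using P(3) by (cases l) auto
      then show "l \<in> {l. is_partition l \<and> dif d l = a \<and> perimeter l = n}"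
        using P b by (auto simp: perimeter_def largest_part_def)
    qed
  qed
  have "card (\<Union>b\<in>{..Suc n}. Q d (Suc n - b) b a) = (\<Sum>b\<le>Suc n. card (Q d (Suc n - b) b a))"
    apply (rule card_UN_disjoint)
    using Q_finite apply auto[2]
    by (auto simp: Q_def)
  then show ?thesis
    by (simp add: gf2_def seteq H_def g_def)
qed

lemma gf2_mult:
  assumes d: "1 \<le> d"
  shows "gf2 d * (1 - var_x2 - var_t2 * var_x2 * (1 - var_x2 ^ d) - var_x2 ^ (d + 1)) = var_x2"
proof -
  let ?G = "gf2 d"
  have expand: "?G * (1 - var_x2 - var_t2 * var_x2 * (1 - var_x2 ^ d) - var_x2 ^ (d + 1))
     = ?G - var_x2 * ?G - var_t2 * (var_x2 * ?G) + var_t2 * (var_x2 ^ (Suc d) * ?G)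
       - var_x2 ^ (Suc d) * ?G"
    by (simp add: algebra_simps)
  have H1: "H d (Suc 0) a = 0" for a by (simp add: H_def g_0b g_c0)
  show ?thesis unfolding expand
  proof (intro fps_ext)
    fix n a
    show "(?G - var_x2 * ?G - var_t2 * (var_x2 * ?G) + var_t2 * (var_x2 ^ (Suc d) * ?G)
       - var_x2 ^ (Suc d) * ?G) $ n $ a = var_x2 $ n $ a"
    proof (cases n)
      case 0 then show ?thesis
        by (simp add: var_x2_def var_t2_def fps_X_power_mult_nth gf2_nth H1)
    next
      case (Suc m)
      have E: "H d (Suc (Suc m)) a - H d (Suc m) a - (if a = 0 then 0 else H d (Suc m) (a - 1))
        + (if Suc m < d \<or> a = 0 then 0 else H d (Suc m - d) (a - 1))
        - (if Suc m < d then 0 else H d (Suc m - d) a) = (if Suc m = 1 \<and> a = 0 then 1 else 0)"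
        by (rule H_E[OF d])
      show ?thesis using E Suc
        by (cases "m < d"; cases "Suc m = d")
           (auto split: if_splits simp del: power_Suc simp: var_x2_def var_t2_def fps_X_power_mult_nth gf2_nth H_0 Suc_diff_le)
    qed
  qed
qed

lemma part2:
  assumes d: "1 \<le> d"
  shows "gf2 d = var_x2 *
           inverse (1 - var_x2 - var_t2 * var_x2 * (1 - var_x2 ^ d) - var_x2 ^ (d + 1))"
proof -
  let ?D = "1 - var_x2 - var_t2 * var_x2 * (1 - var_x2 ^ d) - var_x2 ^ (d + 1)"
  have D0: "?D $ 0 = 1" using d by (simp add: var_x2_def var_t2_def)
  have inv: "?D * inverse ?D = 1"
    by (rule fps_inv_right) (unfold D0, simp add: inv_one_fps)
  have "gf2 d = gf2 d * (?D * inverse ?D)" by (simp only: inv mult_1_right)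
  also have "\<dots> = (gf2 d * ?D) * inverse ?D" by (simp add: mult.assoc)
  also have "\<dots> = var_x2 * inverse ?D" by (simp only: gf2_mult[OF d])
  finally show ?thesis .
qed

theorem lemma3p2:
  fixes d :: nat
  assumes "d \<ge> 1"
  shows "gf3 d = var_x * var_y *
           inverse (1 - var_y - var_t * var_x * (1 - var_y ^ d) - var_x * var_y ^ d)
       \<and> gf2 d = var_x2 *
           inverse (1 - var_x2 - var_t2 * var_x2 * (1 - var_x2 ^ d) - var_x2 ^ (d + 1))"
  using part1[OF assms] part2[OF assms] by simp

end
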